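(* Let $\mathcal{H}$ be a real Hilbert space, let $A\colon \mathcal{H}\rightrightarrows\mathcal{H}$ be maximally monotone and let $B\colon \mathcal{H}\to\mathcal{H}$ be monotone with $(A+B)^{-1}(0)\neq\varnothing$. Suppose $\alpha\in[0,1/3)$, $\lambda>0$, and either (a) $B$ is $L$-Lipschitz and $\lambda < \frac{1-3\alpha}{2L}$, or (b) $B$ is $(1/L)$-cocoercive and $\lambda < \frac{1+\alpha}{2L}$. Given $x_0,x_{-1}\in\mathcal{H}$, define the sequence $(x_k)$ by $$x_{k+1} := J_{\lambda A}\bigl( x_k - 2\lambda B(x_k) +\lambda B(x_{k-1}) + \alpha(x_k-x_{k-1}) \bigr)\quad\forall k\in\mathbb{N}.$$ Then $(x_k)$ converges weakly to a point contained in $(A+B)^{-1}(0)$.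
   Context: $J_{\lambda A}:=(I+\lambda A)^{-1}$ is the resolvent. $B$ is $1/L$-cocoercive if $\langle x-y,B(x)-B(y)\rangle\geq\frac1L\|B(x)-B(y)\|^2$ for all $x,y$. *)

theory Defs
  imports "HOL-Analysis.Analysis"
begin

definition monotone_op :: "('a::real_inner \<Rightarrow> 'a set) \<Rightarrow> bool" where
  "monotone_op A \<longleftrightarrow>
     (\<forall>x y u v. u \<in> A x \<longrightarrow> v \<in> A y \<longrightarrow> inner (x - y) (u - v) \<ge> 0)"

definition max_monotone_op :: "('a::real_inner \<Rightarrow> 'a set) \<Rightarrow> bool" where
  "max_monotone_op A \<longleftrightarrow> monotone_op A \<and>
     (\<forall>A'. monotone_op A' \<and> (\<forall>x. A x \<subseteq> A' x) \<longrightarrow> A' = A)"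

definition monotone_fun :: "('a::real_inner \<Rightarrow> 'a) \<Rightarrow> bool" where
  "monotone_fun B \<longleftrightarrow> (\<forall>x y. inner (x - y) (B x - B y) \<ge> 0)"

definition cocoercive :: "real \<Rightarrow> ('a::real_inner \<Rightarrow> 'a) \<Rightarrow> bool" where
  "cocoercive L B \<longleftrightarrow> (\<forall>x y. inner (x - y) (B x - B y) \<ge> (1 / L) * (norm (B x - B y))\<^sup>2)"

text \<open>Resolvent J_{lam A} = (I + lam A)^{-1}, as a set-valued map.\<close>
definition resolvent :: "real \<Rightarrow> ('a::real_vector \<Rightarrow> 'a set) \<Rightarrow> 'a \<Rightarrow> 'a set" where
  "resolvent lam A z = {p. \<exists>u \<in> A p. z = p + lam *\<^sub>R u}"

definition zeros_sum :: "('a::real_vector \<Rightarrow> 'a set) \<Rightarrow> ('a \<Rightarrow> 'a) \<Rightarrow> 'a set" where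
  "zeros_sum A B = {z. \<exists>u \<in> A z. u + B z = 0}"

definition weakly_converges :: "(nat \<Rightarrow> 'a::real_inner) \<Rightarrow> 'a \<Rightarrow> bool" where
  "weakly_converges x p \<longleftrightarrow> (\<forall>y. ((\<lambda>k. inner (x k) y) \<longlongrightarrow> inner p y) sequentially)"

end

theory Submission
  imports Defs "HOL-Library.Diagonal_Subsequence"
begin

lemma key_identity:
  fixes P C Q bp bc bq :: "'a::real_inner"
  shows "2 * inner P ((C - P) + al *\<^sub>R (C - Q) + lam *\<^sub>R (bp - bc) - lam *\<^sub>R (bc - bq))
    = ((norm C)\<^sup>2 - (norm P)\<^sup>2 - (norm (P - C))\<^sup>2) + al * ((norm C)\<^sup>2 - (norm Q)\<^sup>2 + (norm (C - Q))\<^sup>2)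
      + 2 * lam * inner P (bp - bc) - 2 * lam * inner C (bc - bq)
      + 2 * inner (P - C) (al *\<^sub>R (C - Q) - lam *\<^sub>R (bc - bq))"
  by (simp add: power2_norm_eq_inner inner_diff_left inner_diff_right inner_add_left inner_add_right inner_commute algebra_simps)

lemma nsq_add: fixes a b :: "'a::real_inner"
  shows "(norm (a + b))\<^sup>2 = (norm a)\<^sup>2 + 2 * inner a b + (norm b)\<^sup>2"
  by (simp add: power2_norm_eq_inner inner_add_left inner_add_right inner_commute)

lemma nsq_diff: fixes a b :: "'a::real_inner"
  shows "(norm (a - b))\<^sup>2 = (norm a)\<^sup>2 - 2 * inner a b + (norm b)\<^sup>2"
  by (simp add: power2_norm_eq_inner inner_diff_left inner_diff_right inner_commute)

lemma nsq_scale: fixes a :: "'a::real_normed_vector"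
  shows "(norm (c *\<^sub>R a))\<^sup>2 = c\<^sup>2 * (norm a)\<^sup>2"
  by (simp add: power_mult_distrib)

lemma quad_nonneg_imp_zero:
  fixes g q :: real
  assumes "q \<ge> 0" "\<And>t. t * (2 * g + t * q) \<ge> 0"
  shows "g = 0"
proof -
  define t where "t = - g / (q + 1)"
  have "t * (2 * g + t * q) = - (g\<^sup>2 / (q+1)) * (2 - q / (q + 1))"
    using assms(1) by (simp add: t_def field_simps power2_eq_square)
  moreover have "2 - q / (q + 1) > 0" using assms(1) by (simp add: field_simps)
  ultimately have "(g\<^sup>2 / (q+1)) * (2 - q / (q + 1)) \<le> 0" using assms(2)[of t] by linarith
  moreover have "g \<noteq> 0 \<Longrightarrow> (g\<^sup>2 / (q+1)) * (2 - q / (q + 1)) > 0"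
    using assms(1) \<open>2 - q / (q + 1) > 0\<close> by (intro mult_pos_pos) auto
  ultimately show ?thesis by linarith
qed

lemma null_cmp:
  fixes f :: "'b \<Rightarrow> 'a::real_normed_vector"
  assumes "(g \<longlongrightarrow> 0) F" "\<And>x. norm (f x) \<le> g x"
  shows "(f \<longlongrightarrow> 0) F"
  by (rule Lim_null_comparison[OF _ assms(1)]) (simp add: assms(2))

lemma riesz_sub:
  fixes M :: "'a::{real_inner,complete_space} set" and f :: "'a \<Rightarrow> real"
  assumes clM: "closed M" and M0: "0 \<in> M"
    and Madd: "\<And>a b. a \<in> M \<Longrightarrow> b \<in> M \<Longrightarrow> a + b \<in> M"
    and Mscale: "\<And>c a. a \<in> M \<Longrightarrow> c *\<^sub>R a \<in> M"
    and fadd: "\<And>a b. a \<in> M \<Longrightarrow> b \<in> M \<Longrightarrow> f (a + b) = f a + f b"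
    and fscale: "\<And>c a. a \<in> M \<Longrightarrow> f (c *\<^sub>R a) = c * f a"
    and fbd: "\<And>a. a \<in> M \<Longrightarrow> \<bar>f a\<bar> \<le> C * norm a"
  shows "\<exists>p\<in>M. \<forall>h\<in>M. inner p h = f h"
proof -
  define \<Phi> where "\<Phi> m = (norm m)\<^sup>2 - 2 * f m" for m
  have lb: "\<Phi> m \<ge> - C\<^sup>2" if "m \<in> M" for m
  proof -
    have "f m \<le> C * norm m" using fbd[OF that] by simp
    moreover have "0 \<le> (norm m - C)\<^sup>2" by simp
    ultimately show ?thesis unfolding \<Phi>_def by (simp add: power2_eq_square algebra_simps)
  qed
  define d where "d = Inf (\<Phi> ` M)"
  have bdd: "bdd_below (\<Phi> ` M)" by (intro bdd_belowI[of _ "- C\<^sup>2"]) (use lb in auto)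
  have dle: "d \<le> \<Phi> m" if "m \<in> M" for m
    unfolding d_def using bdd that by (auto intro: cInf_lower)
  have "\<exists>m\<in>M. \<Phi> m < d + 1 / (real n + 1)" for n
  proof -
    have ne: "\<Phi> ` M \<noteq> {}" using M0 by auto
    have "Inf (\<Phi> ` M) < d + 1 / (real n + 1)" unfolding d_def by simp
    from cInf_lessD[OF ne this] show ?thesis by auto
  qed
  then obtain m where mM: "\<And>n. m n \<in> M" and mlt: "\<And>n. \<Phi> (m n) < d + 1 / (real n + 1)"
    by metis
  have midM: "(1/2) *\<^sub>R (a + b) \<in> M" if "a \<in> M" "b \<in> M" for a b
    by (intro Mscale Madd that)
  have par: "(norm (a - b))\<^sup>2 \<le> 2 * (\<Phi> a + \<Phi> b - 2 * d)" if "a \<in> M" "b \<in> M" for a b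
  proof -
    have "d \<le> \<Phi> ((1/2) *\<^sub>R (a + b))" by (rule dle[OF midM[OF that]])
    moreover have "\<Phi> ((1/2) *\<^sub>R (a + b)) = (norm ((1/2) *\<^sub>R (a + b)))\<^sup>2 - (f a + f b)"
      unfolding \<Phi>_def using fscale[OF Madd[OF that], of "1/2"] fadd[OF that] by simp
    moreover have "(norm ((1/2) *\<^sub>R (a + b)))\<^sup>2 = (1/4) * ((norm a)\<^sup>2 + 2 * inner a b + (norm b)\<^sup>2)"
      unfolding nsq_scale nsq_add by (simp add: power2_eq_square)
    moreover have "(norm (a - b))\<^sup>2 = (norm a)\<^sup>2 - 2 * inner a b + (norm b)\<^sup>2"
      by (rule nsq_diff)
    ultimately show ?thesis unfolding \<Phi>_def by simp
  qed
  have cauchy: "Cauchy m"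
  proof (rule metric_CauchyI)
    fix e :: real assume "e > 0"
    obtain N :: nat where N: "real N > 4 / e\<^sup>2" using reals_Archimedean2 by blast
    have "dist (m i) (m j) < e" if "i \<ge> N" "j \<ge> N" for i j
    proof -
      have that': "1 / (real i + 1) \<le> 1 / (real N + 1)" "1 / (real j + 1) \<le> 1 / (real N + 1)"
        using that by (auto simp: field_simps)
      moreover have "4 / (real N + 1) = 4 * (1 / (real N + 1))" by simp
      ultimately have "(norm (m i - m j))\<^sup>2 \<le> 4 / (real N + 1)"
      proof -
        have gen: "X \<le> 4*T" if "X \<le> 2*(P+Q-2*d)" "P < d + r" "Q < d + s" "r \<le> T" "s \<le> T" for X P Q r s T :: real
          using that by argo
        show ?thesis unfolding \<open>4 / (real N + 1) = 4 * (1 / (real N + 1))\<close>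
          by (rule gen[OF par[OF mM mM, of i j] mlt[of i] mlt[of j]]) (use that' in auto)
      qed
      also have "\<dots> < e\<^sup>2"
      proof -
        have "4 < real N * e\<^sup>2" using N \<open>e > 0\<close> by (simp add: field_simps)
        moreover have "e\<^sup>2 > 0" using \<open>e > 0\<close> by simp
        moreover have "(real N + 1) * e\<^sup>2 = real N * e\<^sup>2 + e\<^sup>2" by (simp add: algebra_simps)
        ultimately have "4 < (real N + 1) * e\<^sup>2" by linarith
        thus ?thesis by (simp add: divide_less_eq mult.commute)
      qed
      finally have "(norm (m i - m j))\<^sup>2 < e\<^sup>2" .
      hence "norm (m i - m j) < e" using \<open>e > 0\<close> by (simp add: power_less_imp_less_base)
      thus ?thesis by (simp add: dist_norm)
    qed
    thus "\<exists>N. \<forall>i\<ge>N. \<forall>j\<ge>N. dist (m i) (m j) < e" by blast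
  qed
  then obtain p where mp: "m \<longlonglongrightarrow> p" using Cauchy_convergent_iff convergent_def by blast
  have pM: "p \<in> M" using closed_sequentially[OF clM] mM mp by blast
  have fcont: "(\<lambda>n. f (m n)) \<longlonglongrightarrow> f p"
  proof -
    have "(\<lambda>n. norm (m n - p)) \<longlonglongrightarrow> 0" using mp by (simp add: LIM_zero_iff tendsto_norm_zero)
    hence l0: "(\<lambda>n. \<bar>C\<bar> * norm (m n - p)) \<longlonglongrightarrow> 0" by (simp add: tendsto_mult_right_zero)
    have b0: "norm (f (m n) - f p) \<le> \<bar>C\<bar> * norm (m n - p)" for n
    proof -
      have "m n - p = m n + (-1) *\<^sub>R p" by simp
      hence "f (m n - p) = f (m n) - f p" using fadd[OF mM Mscale[OF pM], of n "-1"] fscale[OF pM, of "-1"] by simp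
      moreover have "m n - p \<in> M" using Madd[OF mM Mscale[OF pM, of "-1"]] by simp
      moreover have "C * norm (m n - p) \<le> \<bar>C\<bar> * norm (m n - p)"
        by (rule mult_right_mono) auto
      ultimately show ?thesis using fbd[of "m n - p"] by simp
    qed
    have "(\<lambda>n. f (m n) - f p) \<longlonglongrightarrow> 0"
      by (rule null_cmp[OF l0 b0])
    thus ?thesis by (simp add: LIM_zero_iff)
  qed
  have "(\<lambda>n. \<Phi> (m n)) \<longlonglongrightarrow> \<Phi> p"
    unfolding \<Phi>_def by (intro tendsto_diff tendsto_mult tendsto_const tendsto_power tendsto_norm mp fcont)
  moreover have "(\<lambda>n. d + 1 / (real n + 1)) \<longlonglongrightarrow> d + 0"
  proof (rule tendsto_add)
    show "(\<lambda>n. 1 / (real n + 1)) \<longlonglongrightarrow> 0"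
      using LIMSEQ_inverse_real_of_nat by (simp add: inverse_eq_divide add.commute)
  qed simp
  ultimately have "\<Phi> p \<le> d + 0"
    by (rule LIMSEQ_le) (use mlt less_imp_le in auto)
  have "inner p h = f h" if hM: "h \<in> M" for h
  proof -
    have "t * (2 * (inner p h - f h) + t * (norm h)\<^sup>2) \<ge> 0" for t
    proof -
      have "p + t *\<^sub>R h \<in> M" by (rule Madd[OF pM Mscale[OF hM]])
      hence "\<Phi> p \<le> \<Phi> (p + t *\<^sub>R h)" using dle \<open>\<Phi> p \<le> d + 0\<close> by (metis add_0_right order_trans)
      moreover have "f (p + t *\<^sub>R h) = f p + t * f h" using fadd[OF pM Mscale[OF hM]] fscale[OF hM] by simp
      moreover have "(norm (p + t *\<^sub>R h))\<^sup>2 = (norm p)\<^sup>2 + 2 * t * inner p h + t\<^sup>2 * (norm h)\<^sup>2"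
        unfolding nsq_add nsq_scale by (simp add: power2_eq_square)
      ultimately have "t * (2 * (inner p h - f h) + t * (norm h)\<^sup>2) = \<Phi> (p + t *\<^sub>R h) - \<Phi> p"
        unfolding \<Phi>_def by (simp add: algebra_simps power2_eq_square)
      thus ?thesis using \<open>\<Phi> p \<le> \<Phi> (p + t *\<^sub>R h)\<close> by linarith
    qed
    thus ?thesis using quad_nonneg_imp_zero[of "(norm h)\<^sup>2" "inner p h - f h"] by simp
  qed
  thus ?thesis using pM by blast
qed

lemma inner_diff_bound:
  fixes a b y w :: "'a::real_inner"
  assumes "norm a \<le> R" "norm b \<le> R"
  shows "\<bar>inner a y - inner b y\<bar> \<le> \<bar>inner a w - inner b w\<bar> + 2 * R * norm (y - w)"
proof -
  have "inner a y - inner b y = (inner a w - inner b w) + inner (a - b) (y - w)"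
    by (simp add: inner_diff_left inner_diff_right)
  moreover have "\<bar>inner (a - b) (y - w)\<bar> \<le> norm (a - b) * norm (y - w)"
    by (rule Cauchy_Schwarz_ineq2)
  moreover have "norm (a - b) \<le> 2 * R"
    using norm_triangle_ineq4[of a b] assms by linarith
  hence "norm (a - b) * norm (y - w) \<le> 2 * R * norm (y - w)"
    by (rule mult_right_mono) simp
  ultimately show ?thesis by linarith
qed

lemma conv_set_closed:
  fixes X :: "nat \<Rightarrow> 'a::real_inner"
  assumes bd: "\<And>n. norm (X n) \<le> R"
  shows "closed {y. convergent (\<lambda>n. inner (X n) y)}"
  unfolding closed_sequential_limits
proof (intro allI impI, elim conjE)
  fix Y :: "nat \<Rightarrow> 'a" and y
  assume Y: "\<forall>n. Y n \<in> {y. convergent (\<lambda>n. inner (X n) y)}" and lim: "Y \<longlonglongrightarrow> y"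
  have R0: "R \<ge> 0" using bd[of 0] norm_ge_zero[of "X 0"] by linarith
  have "Cauchy (\<lambda>n. inner (X n) y)"
  proof (rule metric_CauchyI)
    fix e :: real assume e: "e > 0"
    have "e / (4 * (R + 1)) > 0" using e R0 by simp
    then obtain j where j: "dist (Y j) y < e / (4 * (R + 1))"
      using lim unfolding LIMSEQ_def by (meson order_refl)
    have "Cauchy (\<lambda>n. inner (X n) (Y j))" using Y Cauchy_convergent_iff by blast
    then obtain N where N: "\<And>m n. m \<ge> N \<Longrightarrow> n \<ge> N \<Longrightarrow> dist (inner (X m) (Y j)) (inner (X n) (Y j)) < e / 2"
      using metric_CauchyD[of _ "e/2"] e by (meson half_gt_zero)
    have "dist (inner (X m) y) (inner (X n) y) < e" if "m \<ge> N" "n \<ge> N" for m n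
    proof -
      have "\<bar>inner (X m) y - inner (X n) y\<bar> \<le> \<bar>inner (X m) (Y j) - inner (X n) (Y j)\<bar> + 2 * R * norm (y - Y j)"
        by (rule inner_diff_bound[OF bd bd])
      moreover have "\<bar>inner (X m) (Y j) - inner (X n) (Y j)\<bar> < e / 2"
        using N[OF that] by (simp add: dist_real_def)
      moreover have "2 * R * norm (y - Y j) \<le> 2 * R * (e / (4 * (R + 1)))"
        using j R0 by (intro mult_left_mono) (auto simp: dist_norm norm_minus_commute)
      moreover have "2 * R * (e / (4 * (R + 1))) \<le> e / 2"
        using R0 e by (simp add: field_simps)
      ultimately show ?thesis by (simp add: dist_real_def)
    qed
    thus "\<exists>N. \<forall>m\<ge>N. \<forall>n\<ge>N. dist (inner (X m) y) (inner (X n) y) < e" by blast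
  qed
  thus "y \<in> {y. convergent (\<lambda>n. inner (X n) y)}" by (simp add: Cauchy_convergent_iff)
qed

lemma diag_inner_conv:
  fixes x :: "nat \<Rightarrow> 'a::real_inner"
  assumes bd: "\<And>n. norm (x n) \<le> R"
  shows "\<exists>\<sigma>. strict_mono \<sigma> \<and> (\<forall>j. convergent (\<lambda>n. inner (x (\<sigma> n)) (x j)))"
proof -
  interpret S: subseqs "\<lambda>j s. convergent (\<lambda>n. inner (x (s n)) (x j))"
  proof
    fix j :: nat and s :: "nat \<Rightarrow> nat"
    assume "strict_mono s"
    have "bounded (range (\<lambda>n. inner (x (s n)) (x j)))"
    proof (rule boundedI)
      fix v assume "v \<in> range (\<lambda>n. inner (x (s n)) (x j))"
      then obtain n where v: "v = inner (x (s n)) (x j)" by auto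
      have "\<bar>v\<bar> \<le> norm (x (s n)) * norm (x j)" unfolding v by (rule Cauchy_Schwarz_ineq2)
      also have "\<dots> \<le> R * R"
      proof -
        have "0 \<le> R" using bd[of 0] norm_ge_zero[of "x 0"] by linarith
        thus ?thesis using bd by (intro mult_mono) auto
      qed
      finally show "norm v \<le> R * R" by simp
    qed
    then obtain l r where "strict_mono r" "((\<lambda>n. inner (x (s n)) (x j)) \<circ> r) \<longlonglongrightarrow> l"
      using bounded_imp_convergent_subsequence by blast
    thus "\<exists>r'. strict_mono r' \<and> convergent (\<lambda>n. inner (x ((s \<circ> r') n)) (x j))"
      by (auto simp: convergent_def o_def)
  qed
  have "convergent (\<lambda>n. inner (x (S.diagseq n)) (x j))" for j
  proof -
    have "convergent (\<lambda>n. inner (x ((S.diagseq \<circ> (+) (Suc j)) n)) (x j))"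
      by (rule S.diagseq_holds) (auto dest: convergent_subseq_convergent simp: o_def)
    hence "convergent (\<lambda>n. inner (x (S.diagseq (n + Suc j))) (x j))"
      by (simp add: o_def add.commute)
    thus ?thesis
      using convergent_ignore_initial_segment[of "\<lambda>n. inner (x (S.diagseq n)) (x j)" "Suc j"] by simp
  qed
  thus ?thesis using S.subseq_diagseq by blast
qed

lemma weak_seq_compact:
  fixes x :: "nat \<Rightarrow> 'a::{real_inner,complete_space}"
  assumes bd: "\<And>n. norm (x n) \<le> R"
  shows "\<exists>\<sigma> p. strict_mono \<sigma> \<and> weakly_converges (x \<circ> \<sigma>) p"
proof -
  obtain \<sigma> where \<sigma>: "strict_mono \<sigma>" and cj: "\<And>j. convergent (\<lambda>n. inner (x (\<sigma> n)) (x j))"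
  proof -
    have "\<exists>\<sigma>. strict_mono \<sigma> \<and> (\<forall>j. convergent (\<lambda>n. inner (x (\<sigma> n)) (x j)))"
      by (rule diag_inner_conv[of x R]) (rule bd)
    thus ?thesis using that by blast
  qed
  define X where "X = x \<circ> \<sigma>"
  have bX: "norm (X n) \<le> R" for n unfolding X_def using bd by simp
  have R0: "R \<ge> 0" using bd[of 0] norm_ge_zero[of "x 0"] by linarith
  define M where "M = {y. convergent (\<lambda>n. inner (X n) y)}"
  define f where "f y = lim (\<lambda>n. inner (X n) y)" for y
  have fl: "(\<lambda>n. inner (X n) y) \<longlonglongrightarrow> f y" if "y \<in> M" for y
    using that unfolding M_def f_def by (simp add: convergent_LIMSEQ_iff)
  have clM: "closed M" unfolding M_def by (rule conv_set_closed[OF bX])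
  have M0: "0 \<in> M" unfolding M_def by (simp add: convergent_const)
  have Madd: "a + b \<in> M" if "a \<in> M" "b \<in> M" for a b
    using fl[OF that(1)] fl[OF that(2)] unfolding M_def
    by (auto simp: inner_add_right convergent_def intro: tendsto_add)
  have Mscale: "c *\<^sub>R a \<in> M" if "a \<in> M" for a c
    using fl[OF that] unfolding M_def
    by (auto simp: convergent_def intro: tendsto_mult_left)
  have fadd: "f (a + b) = f a + f b" if "a \<in> M" "b \<in> M" for a b
    unfolding f_def inner_add_right using fl[OF that(1)] fl[OF that(2)] unfolding f_def
    by (intro limI tendsto_add)
  have fscale: "f (c *\<^sub>R a) = c * f a" if "a \<in> M" for a c
    unfolding f_def inner_scaleR_right using fl[OF that] unfolding f_def
    by (intro limI tendsto_mult_left)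
  have fbd: "\<bar>f a\<bar> \<le> R * norm a" if "a \<in> M" for a
  proof (rule LIMSEQ_le_const2)
    show "(\<lambda>n. \<bar>inner (X n) a\<bar>) \<longlonglongrightarrow> \<bar>f a\<bar>" using fl[OF that] by (rule tendsto_rabs)
    have "\<bar>inner (X n) a\<bar> \<le> R * norm a" for n
      using Cauchy_Schwarz_ineq2[of "X n" a] bX[of n] by (meson mult_right_mono norm_ge_zero order_trans)
    thus "\<exists>N. \<forall>n\<ge>N. \<bar>inner (X n) a\<bar> \<le> R * norm a" by blast
  qed
  obtain p where pM: "p \<in> M" and pf: "\<And>h. h \<in> M \<Longrightarrow> inner p h = f h"
    using riesz_sub[OF clM M0 Madd Mscale fadd fscale fbd] by blast
  have XM: "X n \<in> M" for n
  proof -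
    have "convergent (\<lambda>k. inner (X k) (x (\<sigma> n)))" unfolding X_def o_def by (rule cj)
    thus ?thesis unfolding M_def X_def by simp
  qed
  have "(\<lambda>n. inner (X n) y) \<longlonglongrightarrow> inner p y" for y
  proof -
    have "\<exists>q\<in>M. \<forall>h\<in>M. inner q h = inner y h"
      by (rule riesz_sub[OF clM M0 Madd Mscale, of "\<lambda>h. inner y h" "norm y"])
         (auto simp: inner_add_right Cauchy_Schwarz_ineq2)
    then obtain q where qM: "q \<in> M" and qh: "\<And>h. h \<in> M \<Longrightarrow> inner q h = inner y h" by blast
    have "inner (X n) y = inner (X n) q" for n using qh[OF XM[of n]] by (simp add: inner_commute)
    moreover have "f q = inner p y" using pf[OF qM] qh[OF pM] by (simp add: inner_commute)
    ultimately show ?thesis using fl[OF qM] by simp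
  qed
  hence "weakly_converges X p" unfolding weakly_converges_def by blast
  thus ?thesis using \<sigma> unfolding X_def by blast
qed

lemma weak_subseq:
  assumes "weakly_converges x p" "strict_mono r"
  shows "weakly_converges (x \<circ> r) p"
  using assms LIMSEQ_subseq_LIMSEQ unfolding weakly_converges_def by (fastforce simp: o_def)

lemma le_one_plus_sq: "(t::real) \<le> 1 + t\<^sup>2"
proof -
  have "0 \<le> (t - 1/2)\<^sup>2" by simp
  moreover have "(t - 1/2)\<^sup>2 = t\<^sup>2 - t + 1/4" by (simp add: power2_eq_square algebra_simps)
  ultimately show ?thesis by linarith
qed

lemma weak_unique_Z:
  fixes x :: "nat \<Rightarrow> 'a::real_inner"
  assumes cp: "convergent (\<lambda>k. (norm (x k - p))\<^sup>2)" and cq: "convergent (\<lambda>k. (norm (x k - q))\<^sup>2)"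
    and s: "strict_mono \<sigma>" "weakly_converges (x \<circ> \<sigma>) p"
    and r: "strict_mono \<rho>" "weakly_converges (x \<circ> \<rho>) q"
  shows "p = q"
proof -
  define g where "g k = (norm (x k - p))\<^sup>2 - (norm (x k - q))\<^sup>2" for k
  have gform: "g k = 2 * inner (x k) (q - p) + ((norm p)\<^sup>2 - (norm q)\<^sup>2)" for k
    unfolding g_def nsq_diff by (simp add: inner_diff_right algebra_simps)
  from cp cq obtain L1 L2 where "(\<lambda>k. (norm (x k - p))\<^sup>2) \<longlonglongrightarrow> L1" "(\<lambda>k. (norm (x k - q))\<^sup>2) \<longlonglongrightarrow> L2"
    unfolding convergent_def by blast
  hence gL: "g \<longlonglongrightarrow> L1 - L2" unfolding g_def by (rule tendsto_diff)
  define L where "L = L1 - L2"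
  note gL = gL[folded L_def]
  have l1: "(\<lambda>n. g (\<sigma> n)) \<longlonglongrightarrow> 2 * inner p (q - p) + ((norm p)\<^sup>2 - (norm q)\<^sup>2)"
  proof -
    have "(\<lambda>n. inner (x (\<sigma> n)) (q - p)) \<longlonglongrightarrow> inner p (q - p)"
      using s(2) unfolding weakly_converges_def o_def by blast
    thus ?thesis unfolding gform by (intro tendsto_add tendsto_mult tendsto_const)
  qed
  have l2: "(\<lambda>n. g (\<rho> n)) \<longlonglongrightarrow> 2 * inner q (q - p) + ((norm p)\<^sup>2 - (norm q)\<^sup>2)"
  proof -
    have "(\<lambda>n. inner (x (\<rho> n)) (q - p)) \<longlonglongrightarrow> inner q (q - p)"
      using r(2) unfolding weakly_converges_def o_def by blast
    thus ?thesis unfolding gform by (intro tendsto_add tendsto_mult tendsto_const)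
  qed
  have "(\<lambda>n. g (\<sigma> n)) \<longlonglongrightarrow> L" using LIMSEQ_subseq_LIMSEQ[OF gL s(1)] by (simp add: o_def)
  hence e1: "2 * inner p (q - p) + ((norm p)\<^sup>2 - (norm q)\<^sup>2) = L" using l1 LIMSEQ_unique by blast
  have "(\<lambda>n. g (\<rho> n)) \<longlonglongrightarrow> L" using LIMSEQ_subseq_LIMSEQ[OF gL r(1)] by (simp add: o_def)
  hence e2: "2 * inner q (q - p) + ((norm p)\<^sup>2 - (norm q)\<^sup>2) = L" using l2 LIMSEQ_unique by blast
  have "inner (q - p) (q - p) = 0" using e1 e2 by (simp add: inner_diff_left)
  thus ?thesis by simp
qed

lemma opial:
  fixes x :: "nat \<Rightarrow> 'a::{real_inner,complete_space}"
  assumes Zne: "Z \<noteq> {}"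
    and conv: "\<And>z. z \<in> Z \<Longrightarrow> convergent (\<lambda>k. (norm (x k - z))\<^sup>2)"
    and clus: "\<And>\<sigma> p. strict_mono \<sigma> \<Longrightarrow> weakly_converges (x \<circ> \<sigma>) p \<Longrightarrow> p \<in> Z"
  shows "\<exists>p\<in>Z. weakly_converges x p"
proof -
  obtain z0 where z0: "z0 \<in> Z" using Zne by blast
  obtain K where K: "\<And>n. norm ((norm (x n - z0))\<^sup>2) \<le> K"
  proof -
    from convergent_imp_Bseq[OF conv[OF z0]] obtain K where "\<forall>n. norm ((norm (x n - z0))\<^sup>2) \<le> K"
      by (rule BseqE)
    thus ?thesis using that by blast
  qed
  define R where "R = norm z0 + 1 + K"
  have bd: "norm (x n) \<le> R" for n
  proof -
    have "norm (x n - z0) \<le> 1 + (norm (x n - z0))\<^sup>2"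
      by (rule le_one_plus_sq)
    moreover have "norm (x n) \<le> norm z0 + norm (x n - z0)"
      using norm_triangle_ineq2[of "x n" z0] by linarith
    ultimately show ?thesis using K[of n] unfolding R_def by simp
  qed
  obtain \<sigma> p where \<sigma>: "strict_mono \<sigma>" and wp: "weakly_converges (x \<circ> \<sigma>) p"
    using weak_seq_compact[of x R] bd by blast
  have pZ: "p \<in> Z" using clus[OF \<sigma> wp] .
  have "weakly_converges x p"
    unfolding weakly_converges_def
  proof (rule allI, rule ccontr)
    fix y assume nl: "\<not> (\<lambda>k. inner (x k) y) \<longlonglongrightarrow> inner p y"
    then obtain r where r: "r > 0" and fr: "\<forall>N. \<exists>n\<ge>N. \<not> dist (inner (x n) y) (inner p y) < r"
      unfolding LIMSEQ_def by blast
    define S where "S = {n. \<not> dist (inner (x n) y) (inner p y) < r}"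
    have infS: "infinite S" unfolding infinite_nat_iff_unbounded_le S_def using fr by blast
    define \<rho> where "\<rho> = enumerate S"
    have \<rho>: "strict_mono \<rho>" unfolding \<rho>_def by (rule strict_monoI) (rule enumerate_mono[OF _ infS])
    have \<rho>S: "\<rho> n \<in> S" for n unfolding \<rho>_def by (rule enumerate_in_set[OF infS])
    obtain \<tau> q where \<tau>: "strict_mono \<tau>" and wq: "weakly_converges ((x \<circ> \<rho>) \<circ> \<tau>) q"
      using weak_seq_compact[of "x \<circ> \<rho>" R] bd by auto
    have \<rho>\<tau>: "strict_mono (\<rho> \<circ> \<tau>)" using \<rho> \<tau> by (rule strict_mono_o)
    have wq': "weakly_converges (x \<circ> (\<rho> \<circ> \<tau>)) q" using wq by (simp add: o_assoc)
    have qZ: "q \<in> Z" using clus[OF \<rho>\<tau> wq'] .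
    have "p = q" by (rule weak_unique_Z[OF conv[OF pZ] conv[OF qZ] \<sigma> wp \<rho>\<tau> wq'])
    hence "(\<lambda>n. inner (x (\<rho> (\<tau> n))) y) \<longlonglongrightarrow> inner p y"
      using wq' unfolding weakly_converges_def by (simp add: o_def)
    then obtain N where "\<forall>n\<ge>N. dist (inner (x (\<rho> (\<tau> n))) y) (inner p y) < r"
      using r unfolding LIMSEQ_def by blast
    moreover have "\<not> dist (inner (x (\<rho> (\<tau> N))) y) (inner p y) < r" using \<rho>S[of "\<tau> N"] unfolding S_def by simp
    ultimately show False by blast
  qed
  thus ?thesis using pZ by blast
qed

lemma maxmono_test:
  assumes mm: "max_monotone_op A" and h: "\<And>y v. v \<in> A y \<Longrightarrow> inner (p - y) (b - v) \<ge> 0"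
  shows "b \<in> A p"
proof -
  define A' where "A' = A(p := insert b (A p))"
  have mA: "monotone_op A" using mm unfolding max_monotone_op_def by blast
  have "monotone_op A'"
    unfolding monotone_op_def
  proof (intro allI impI)
    fix x y u v assume u: "u \<in> A' x" and v: "v \<in> A' y"
    have uc: "u \<in> A x \<or> (x = p \<and> u = b)" using u unfolding A'_def by (auto split: if_splits)
    have vc: "v \<in> A y \<or> (y = p \<and> v = b)" using v unfolding A'_def by (auto split: if_splits)
    show "inner (x - y) (u - v) \<ge> 0"
    proof (cases "u \<in> A x")
      case True
      show ?thesis
      proof (cases "v \<in> A y")
        case True
        then show ?thesis using \<open>u \<in> A x\<close> mA unfolding monotone_op_def by blast
      next
        case False
        hence "y = p" "v = b" using vc by auto
        have "inner (p - x) (b - u) \<ge> 0" using h[OF \<open>u \<in> A x\<close>] .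
        moreover have "inner (x - y) (u - v) = inner (p - x) (b - u)"
          using \<open>y = p\<close> \<open>v = b\<close> by (simp add: inner_diff_left inner_diff_right)
        ultimately show ?thesis by simp
      qed
    next
      case False
      hence "x = p" "u = b" using uc by auto
      show ?thesis
      proof (cases "v \<in> A y")
        case True
        then show ?thesis using h[OF True] \<open>x = p\<close> \<open>u = b\<close> by simp
      next
        case False
        hence "y = p" "v = b" using vc by auto
        then show ?thesis using \<open>x = p\<close> \<open>u = b\<close> by simp
      qed
    qed
  qed
  moreover have "\<forall>x. A x \<subseteq> A' x" unfolding A'_def by auto
  ultimately have "A' = A" using mm unfolding max_monotone_op_def by blast
  thus ?thesis unfolding A'_def by (metis fun_upd_same insertI1)
qed

lemma minty_lip:
  fixes B :: "'a::real_inner \<Rightarrow> 'a"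
  assumes lip: "\<And>u v. norm (B u - B v) \<le> L * norm (u - v)"
    and h: "\<And>z. inner (p - z) (b - B z) \<ge> 0"
  shows "b = B p"
proof -
  define w where "w = b - B p"
  define t where "t = 1 / (2 * (\<bar>L\<bar> + 1))"
  have t0: "t > 0" unfolding t_def by (simp add: add_pos_nonneg)
  have tL: "\<bar>L\<bar> * t \<le> 1/2" unfolding t_def by (simp add: field_simps)
  have "inner (p - (p + t *\<^sub>R w)) (b - B (p + t *\<^sub>R w)) \<ge> 0" by (rule h)
  hence "t * inner w (b - B (p + t *\<^sub>R w)) \<le> 0" by (simp add: inner_minus_left)
  hence i1: "inner w (b - B (p + t *\<^sub>R w)) \<le> 0" using t0 by (simp add: mult_le_0_iff)
  have "b - B (p + t *\<^sub>R w) = w - (B (p + t *\<^sub>R w) - B p)" unfolding w_def by simp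
  hence "inner w (b - B (p + t *\<^sub>R w)) = inner w w - inner w (B (p + t *\<^sub>R w) - B p)"
    by (simp add: inner_diff_right inner_add_right)
  moreover have "inner w (B (p + t *\<^sub>R w) - B p) \<le> norm w * (L * norm (t *\<^sub>R w))"
  proof -
    have "inner w (B (p + t *\<^sub>R w) - B p) \<le> norm w * norm (B (p + t *\<^sub>R w) - B p)"
      by (rule norm_cauchy_schwarz)
    also have "\<dots> \<le> norm w * (L * norm (t *\<^sub>R w))"
      using lip[of "p + t *\<^sub>R w" p] by (intro mult_left_mono) auto
    finally show ?thesis .
  qed
  moreover have "norm w * (L * norm (t *\<^sub>R w)) \<le> (1/2) * (norm w)\<^sup>2"
  proof -
    have "norm w * (L * norm (t *\<^sub>R w)) = (L * t) * (norm w)\<^sup>2"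
      using t0 by (simp add: power2_eq_square)
    also have "\<dots> \<le> (1/2) * (norm w)\<^sup>2"
    proof (rule mult_right_mono)
      have "L * t \<le> \<bar>L\<bar> * t" using t0 by (intro mult_right_mono) auto
      thus "L * t \<le> 1/2" using tL by linarith
    qed simp
    finally show ?thesis .
  qed
  ultimately have "(norm w)\<^sup>2 \<le> (1/2) * (norm w)\<^sup>2" using i1 by (simp add: power2_norm_eq_inner)
  hence "w = 0" by simp
  thus ?thesis unfolding w_def by simp
qed

lemma weak_inner_left:
  assumes "weakly_converges X p"
  shows "(\<lambda>n. inner y (X n)) \<longlonglongrightarrow> inner y p"
proof -
  have "(\<lambda>n. inner (X n) y) \<longlonglongrightarrow> inner p y" using assms unfolding weakly_converges_def by blast
  thus ?thesis by (simp add: inner_commute)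
qed

lemma demiclosed:
  fixes P U :: "nat \<Rightarrow> 'a::{real_inner,complete_space}"
  assumes mm: "max_monotone_op A" and mB: "monotone_fun B"
    and lip: "\<And>u v. norm (B u - B v) \<le> L * norm (u - v)"
    and UA: "\<And>n. U n \<in> A (P n)" and W0: "(\<lambda>n. U n + B (P n)) \<longlonglongrightarrow> 0"
    and wP: "weakly_converges P p"
    and bP: "\<And>n. norm (P n) \<le> R" and bBP: "\<And>n. norm (B (P n)) \<le> R"
  shows "- B p \<in> A p"
proof -
  obtain \<tau> b where \<tau>: "strict_mono \<tau>" and wb: "weakly_converges ((\<lambda>n. B (P n)) \<circ> \<tau>) b"
    using weak_seq_compact[of "\<lambda>n. B (P n)" R] bBP by blast
  have R0: "R \<ge> 0" using bP[of 0] norm_ge_zero[of "P 0"] by linarith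
  have "bounded (range (\<lambda>n. inner (P (\<tau> n)) (B (P (\<tau> n)))))"
  proof (rule boundedI)
    fix v assume "v \<in> range (\<lambda>n. inner (P (\<tau> n)) (B (P (\<tau> n))))"
    then obtain n where v: "v = inner (P (\<tau> n)) (B (P (\<tau> n)))" by auto
    have "\<bar>v\<bar> \<le> norm (P (\<tau> n)) * norm (B (P (\<tau> n)))" unfolding v by (rule Cauchy_Schwarz_ineq2)
    also have "\<dots> \<le> R * R" using bP bBP R0 by (intro mult_mono) auto
    finally show "norm v \<le> R * R" by simp
  qed
  then obtain \<nu> s0 where \<nu>: "strict_mono \<nu>"
    and sl: "((\<lambda>n. inner (P (\<tau> n)) (B (P (\<tau> n)))) \<circ> \<nu>) \<longlonglongrightarrow> s0"
    using bounded_imp_convergent_subsequence by blast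
  define k where "k = \<tau> \<circ> \<nu>"
  have k: "strict_mono k" unfolding k_def using \<tau> \<nu> by (rule strict_mono_o)
  define P' where "P' n = P (k n)" for n
  define BP where "BP n = B (P (k n))" for n
  define W where "W n = U (k n) + B (P (k n))" for n
  have wP': "weakly_converges P' p"
    using weak_subseq[OF wP k] unfolding P'_def o_def by simp
  have wBP: "weakly_converges BP b"
    using weak_subseq[OF wb \<nu>] unfolding BP_def k_def o_def by simp
  have sl': "(\<lambda>n. inner (P' n) (BP n)) \<longlonglongrightarrow> s0"
    using sl unfolding P'_def BP_def k_def o_def by simp
  have W0': "W \<longlonglongrightarrow> 0"
    using LIMSEQ_subseq_LIMSEQ[OF W0 k] unfolding W_def o_def by simp
  have bP': "norm (P' n) \<le> R" for n unfolding P'_def by (rule bP)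
  have null: "(\<lambda>n. inner (P' n - y) (W n)) \<longlonglongrightarrow> 0" for y
  proof (rule null_cmp)
    show "(\<lambda>n. (R + norm y) * norm (W n)) \<longlonglongrightarrow> 0"
      using W0' by (simp add: tendsto_mult_right_zero tendsto_norm_zero)
    fix n
    have "norm (inner (P' n - y) (W n)) \<le> norm (P' n - y) * norm (W n)"
      using Cauchy_Schwarz_ineq2 by simp
    also have "\<dots> \<le> (R + norm y) * norm (W n)"
    proof (rule mult_right_mono)
      show "norm (P' n - y) \<le> R + norm y"
        using norm_triangle_ineq4[of "P' n" y] bP'[of n] by linarith
    qed simp
    finally show "norm (inner (P' n - y) (W n)) \<le> (R + norm y) * norm (W n)" .
  qed
  have Alim: "s0 \<le> inner y b - inner p v + inner y v" if vy: "v \<in> A y" for y v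
  proof -
    have mon: "inner (P' n - y) (U (k n) - v) \<ge> 0" for n
      using mm UA[of "k n"] vy unfolding max_monotone_op_def monotone_op_def P'_def by blast
    have eq: "inner (P' n - y) (U (k n) - v) =
       inner (P' n - y) (W n) - inner (P' n) (BP n) + inner y (BP n) - inner (P' n) v + inner y v" for n
    proof -
      have "U (k n) = W n - BP n" unfolding W_def BP_def by simp
      thus ?thesis by (simp add: inner_diff_left inner_diff_right)
    qed
    have lim: "(\<lambda>n. inner (P' n - y) (W n) - inner (P' n) (BP n) + inner y (BP n) - inner (P' n) v + inner y v)
       \<longlonglongrightarrow> 0 - s0 + inner y b - inner p v + inner y v"
      using null[of y] sl' weak_inner_left[OF wBP, of y] wP'[unfolded weakly_converges_def, rule_format, of v]
      by (intro tendsto_add tendsto_diff tendsto_const) auto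
    have "0 \<le> 0 - s0 + inner y b - inner p v + inner y v"
      by (rule LIMSEQ_le_const[OF lim]) (use mon eq in auto)
    thus ?thesis by simp
  qed
  have Blim: "0 \<le> s0 - inner p (B z) - inner z b + inner z (B z)" for z
  proof -
    have mon: "inner (P' n - z) (BP n - B z) \<ge> 0" for n
      using mB unfolding monotone_fun_def P'_def BP_def by blast
    have eq: "inner (P' n - z) (BP n - B z) = inner (P' n) (BP n) - inner (P' n) (B z) - inner z (BP n) + inner z (B z)" for n
      by (simp add: inner_diff_left inner_diff_right)
    have lim: "(\<lambda>n. inner (P' n) (BP n) - inner (P' n) (B z) - inner z (BP n) + inner z (B z))
       \<longlonglongrightarrow> s0 - inner p (B z) - inner z b + inner z (B z)"
      using sl' weak_inner_left[OF wBP, of z] wP'[unfolded weakly_converges_def, rule_format, of "B z"]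
      by (intro tendsto_add tendsto_diff tendsto_const) auto
    show ?thesis by (rule LIMSEQ_le_const[OF lim]) (use mon eq in auto)
  qed
  have s0b: "inner p b \<le> s0" using Blim[of p] by simp
  have mb: "- b \<in> A p"
  proof (rule maxmono_test[OF mm])
    fix y v assume "v \<in> A y"
    from Alim[OF this] s0b have "0 \<le> inner y b - inner p v + inner y v - inner p b" by linarith
    thus "inner (p - y) (- b - v) \<ge> 0" by (simp add: inner_diff_left inner_diff_right inner_commute)
  qed
  from Alim[OF mb] have "s0 \<le> inner p b" by simp
  hence "s0 = inner p b" using s0b by linarith
  hence "inner (p - z) (b - B z) \<ge> 0" for z using Blim[of z]
    by (simp add: inner_diff_left inner_diff_right inner_commute)
  hence "b = B p" by (rule minty_lip[OF lip])
  thus ?thesis using mb by simp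
qed

lemma inertial_limit:
  fixes d :: "nat \<Rightarrow> real"
  assumes bd: "\<And>k. \<bar>d k\<bar> \<le> D" and a0: "0 \<le> \<alpha>" and a1: "\<alpha> < 1"
    and lim: "(\<lambda>k. d (Suc k) - \<alpha> * d k) \<longlonglongrightarrow> l"
  shows "convergent d"
proof -
  define c where "c = l / (1 - \<alpha>)"
  define r where "r k = d k - c" for k
  have rlim: "(\<lambda>k. r (Suc k) - \<alpha> * r k) \<longlonglongrightarrow> 0"
  proof -
    have "r (Suc k) - \<alpha> * r k = (d (Suc k) - \<alpha> * d k) - l" for k
    proof -
      have cc: "(1 - \<alpha>) * c = l" unfolding c_def using a1 by simp
      show ?thesis unfolding r_def using cc by (simp add: algebra_simps)
    qed
    thus ?thesis using lim by (simp add: LIM_zero)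
  qed
  define D' where "D' = D + \<bar>c\<bar>"
  have rb: "\<bar>r k\<bar> \<le> D'" for k unfolding r_def D'_def using bd[of k] by linarith
  have "r \<longlonglongrightarrow> 0"
  proof (rule LIMSEQ_I)
    fix e :: real assume e: "e > 0"
    define \<eta> where "\<eta> = e * (1 - \<alpha>) / 2"
    have \<eta>0: "\<eta> > 0" unfolding \<eta>_def using e a1 by simp
    obtain N where N: "\<And>k. k \<ge> N \<Longrightarrow> \<bar>r (Suc k) - \<alpha> * r k\<bar> < \<eta>"
      using LIMSEQ_D[OF rlim \<eta>0] by auto
    have ind: "\<bar>r (N + j)\<bar> \<le> \<alpha> ^ j * D' + \<eta> / (1 - \<alpha>)" for j
    proof (induction j)
      case 0
      have "\<eta> / (1 - \<alpha>) \<ge> 0" using \<eta>0 a1 by simp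
      then show ?case using rb[of N] by simp
    next
      case (Suc j)
      have "\<bar>r (Suc (N + j))\<bar> \<le> \<alpha> * \<bar>r (N + j)\<bar> + \<eta>"
      proof -
        have "\<bar>r (Suc (N + j))\<bar> \<le> \<bar>\<alpha> * r (N + j)\<bar> + \<bar>r (Suc (N + j)) - \<alpha> * r (N + j)\<bar>" by linarith
        moreover have "\<bar>\<alpha> * r (N + j)\<bar> = \<alpha> * \<bar>r (N + j)\<bar>" using a0 by (simp add: abs_mult)
        ultimately show ?thesis using N[of "N + j"] by linarith
      qed
      also have "\<dots> \<le> \<alpha> * (\<alpha> ^ j * D' + \<eta> / (1 - \<alpha>)) + \<eta>"
        using Suc.IH a0 by (intro add_right_mono mult_left_mono) auto
      also have "\<dots> = \<alpha> ^ Suc j * D' + \<eta> / (1 - \<alpha>)"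
        using a1 by (simp add: field_simps)
      finally show ?case by simp
    qed
    have "(\<lambda>j. \<alpha> ^ j * D') \<longlonglongrightarrow> 0 * D'"
      using a0 a1 by (intro tendsto_mult tendsto_const LIMSEQ_power_zero) simp
    hence "(\<lambda>j. \<alpha> ^ j * D') \<longlonglongrightarrow> 0" by simp
    from LIMSEQ_D[OF this, of "e/2"] e obtain M where M: "\<And>j. j \<ge> M \<Longrightarrow> \<bar>\<alpha> ^ j * D'\<bar> < e / 2"
      by auto
    have "\<eta> / (1 - \<alpha>) = e / 2" unfolding \<eta>_def using a1 by (simp add: field_simps)
    have "norm (r k - 0) < e" if "k \<ge> N + M" for k
    proof -
      define j where "j = k - N"
      have kj: "k = N + j" "j \<ge> M" using that unfolding j_def by auto
      have "\<bar>r k\<bar> \<le> \<alpha> ^ j * D' + e / 2" using ind[of j] kj \<open>\<eta> / (1 - \<alpha>) = e / 2\<close> by simp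
      moreover have "\<alpha> ^ j * D' < e / 2" using M[OF kj(2)] by linarith
      ultimately show ?thesis by simp
    qed
    thus "\<exists>no. \<forall>k\<ge>no. norm (r k - 0) < e" by blast
  qed
  hence "d \<longlonglongrightarrow> c" unfolding r_def by (simp add: LIM_zero_iff)
  thus ?thesis by (rule convergentI)
qed

lemma key_identity2:
  fixes p c q z bp bc bq :: "'a::real_inner"
  shows "2 * inner (p - z) ((c - p) + al *\<^sub>R (c - q) + lam *\<^sub>R (bp - bc) - lam *\<^sub>R (bc - bq))
    = ((norm (c - z))\<^sup>2 - (norm (p - z))\<^sup>2 - (norm (p - c))\<^sup>2) + al * ((norm (c - z))\<^sup>2 - (norm (q - z))\<^sup>2 + (norm (c - q))\<^sup>2)
      + 2 * lam * inner (p - z) (bp - bc) - 2 * lam * inner (c - z) (bc - bq)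
      + 2 * inner (p - c) (al *\<^sub>R (c - q) - lam *\<^sub>R (bc - bq))"
proof -
  have "p - c = (p - z) - (c - z)" "c - q = (c - z) - (q - z)" "c - p = (c - z) - (p - z)" by simp_all
  then show ?thesis
    using key_identity[of "p - z" "c - z" al "q - z" lam bp bc bq] by simp
qed

lemma lyap_arith:
  fixes d0 d1 d2 e0 e1 a0 a1 X al lam kap :: real
  assumes "0 \<le> (d1 - d2 - e1) + al * (d1 - d0 + e0) + 2*lam*a1 - 2*lam*a0 + X" "X \<le> kap * (e1 + e0)"
  shows "d2 - al*d1 - 2*lam*a1 + (al+kap)*e1 \<le> d1 - al*d0 - 2*lam*a0 + (al+kap)*e0 - (1 - al - 2*kap)*e1"
  using assms by (simp add: algebra_simps)

lemma two_ab_le: "2 * (a::real) * b \<le> a\<^sup>2 + b\<^sup>2"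
proof -
  have "0 \<le> (a - b)\<^sup>2" by simp
  thus ?thesis by (simp add: power2_eq_square algebra_simps)
qed

lemma lyap_step:
  fixes A :: "'a::real_inner \<Rightarrow> 'a set" and B :: "'a \<Rightarrow> 'a"
  assumes mA: "monotone_op A" and mB: "monotone_fun B"
    and kapb: "\<And>u v. norm (alpha *\<^sub>R (u - v) - lam *\<^sub>R (B u - B v)) \<le> kap * norm (u - v)"
    and k0: "kap \<ge> 0" and lam: "lam > 0"
    and uA: "u \<in> A p"
    and ue: "c - (2 * lam) *\<^sub>R B c + lam *\<^sub>R B q + alpha *\<^sub>R (c - q) = p + lam *\<^sub>R u"
    and zA: "- B z \<in> A z"
  shows "(norm (p - z))\<^sup>2 - alpha * (norm (c - z))\<^sup>2 - 2 * lam * inner (p - z) (B p - B c) + (alpha + kap) * (norm (p - c))\<^sup>2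
     \<le> (norm (c - z))\<^sup>2 - alpha * (norm (q - z))\<^sup>2 - 2 * lam * inner (c - z) (B c - B q) + (alpha + kap) * (norm (c - q))\<^sup>2
        - (1 - alpha - 2 * kap) * (norm (p - c))\<^sup>2"
proof -
  have luk: "lam *\<^sub>R u = c - (2 * lam) *\<^sub>R B c + lam *\<^sub>R B q + alpha *\<^sub>R (c - q) - p"
    using ue by (simp add: algebra_simps)
  have vec: "(c - p) + alpha *\<^sub>R (c - q) + lam *\<^sub>R (B p - B c) - lam *\<^sub>R (B c - B q)
      = lam *\<^sub>R (u - (- B z)) + lam *\<^sub>R (B p - B z)"
  proof -
    have "lam *\<^sub>R (u - (- B z)) + lam *\<^sub>R (B p - B z) = lam *\<^sub>R u + lam *\<^sub>R B p"
      by (simp add: algebra_simps)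
    also have "\<dots> = (c - p) + alpha *\<^sub>R (c - q) + lam *\<^sub>R (B p - B c) - lam *\<^sub>R (B c - B q)"
    proof -
      have two: "(2 * lam) *\<^sub>R B c = lam *\<^sub>R B c + lam *\<^sub>R B c"
        by (metis mult_2 scaleR_add_left)
      show ?thesis unfolding luk two by (simp add: algebra_simps)
    qed
    finally show ?thesis by simp
  qed
  have m1: "0 \<le> inner (p - z) (u - (- B z))" using mA uA zA unfolding monotone_op_def by blast
  have m2: "0 \<le> inner (p - z) (B p - B z)" using mB unfolding monotone_fun_def by blast
  have pos: "0 \<le> 2 * inner (p - z) ((c - p) + alpha *\<^sub>R (c - q) + lam *\<^sub>R (B p - B c) - lam *\<^sub>R (B c - B q))"
    unfolding vec inner_add_right inner_scaleR_right using m1 m2 lam by simp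
  define X where "X = 2 * inner (p - c) (alpha *\<^sub>R (c - q) - lam *\<^sub>R (B c - B q))"
  have Xb: "X \<le> kap * ((norm (p - c))\<^sup>2 + (norm (c - q))\<^sup>2)"
  proof -
    have "inner (p - c) (alpha *\<^sub>R (c - q) - lam *\<^sub>R (B c - B q)) \<le> norm (p - c) * norm (alpha *\<^sub>R (c - q) - lam *\<^sub>R (B c - B q))"
      by (rule norm_cauchy_schwarz)
    also have "\<dots> \<le> norm (p - c) * (kap * norm (c - q))"
      by (intro mult_left_mono kapb) simp
    finally have "X \<le> kap * (2 * norm (p - c) * norm (c - q))" unfolding X_def by (simp add: algebra_simps)
    also have "\<dots> \<le> kap * ((norm (p - c))\<^sup>2 + (norm (c - q))\<^sup>2)"
      using k0 two_ab_le by (intro mult_left_mono) auto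
    finally show ?thesis .
  qed
  show ?thesis
    using lyap_arith[OF pos[unfolded key_identity2, folded X_def] Xb] by simp
qed

lemma lower_arith:
  fixes lam a L d1 d0 e al kap :: real
  assumes "2*lam*a \<le> lam*L*(d1+e)" "0 \<le> (al + kap - lam*L)*e"
  shows "(1-lam*L)*d1 - al*d0 \<le> d1 - al*d0 - 2*lam*a + (al+kap)*e"
  using assms by (simp add: algebra_simps)

lemma core:
  fixes A :: "'a::{real_inner,complete_space} \<Rightarrow> 'a set" and B :: "'a \<Rightarrow> 'a"
    and x :: "nat \<Rightarrow> 'a" and alpha lam L kap :: real
  assumes mA: "monotone_op A" and mB: "monotone_fun B"
    and lip: "\<And>u v. norm (B u - B v) \<le> L * norm (u - v)" and L0: "L \<ge> 0"
    and kapb: "\<And>u v. norm (alpha *\<^sub>R (u - v) - lam *\<^sub>R (B u - B v)) \<le> kap * norm (u - v)"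
    and k0: "kap \<ge> 0" and a0: "0 \<le> alpha" and lam: "lam > 0"
    and del: "1 - alpha - 2 * kap > 0" and ak: "lam * L \<le> alpha + kap" and ac: "alpha < 1 - lam * L"
    and it: "\<And>k. x (Suc (Suc k)) \<in> resolvent lam A
               (x (Suc k) - (2 * lam) *\<^sub>R B (x (Suc k)) + lam *\<^sub>R B (x k)
                + alpha *\<^sub>R (x (Suc k) - x k))"
    and z: "z \<in> zeros_sum A B"
  shows "convergent (\<lambda>k. (norm (x k - z))\<^sup>2) \<and> (\<lambda>k. x (Suc k) - x k) \<longlonglongrightarrow> 0
         \<and> (\<exists>D. \<forall>k. norm (x k - z) \<le> D)"
proof -
  obtain u where uA: "\<And>k. u k \<in> A (x (Suc (Suc k)))"
    and ue: "\<And>k. x (Suc k) - (2 * lam) *\<^sub>R B (x (Suc k)) + lam *\<^sub>R B (x k) + alpha *\<^sub>R (x (Suc k) - x k)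
               = x (Suc (Suc k)) + lam *\<^sub>R u k"
  proof -
    have "\<forall>k. \<exists>v. v \<in> A (x (Suc (Suc k))) \<and> x (Suc k) - (2 * lam) *\<^sub>R B (x (Suc k)) + lam *\<^sub>R B (x k)
        + alpha *\<^sub>R (x (Suc k) - x k) = x (Suc (Suc k)) + lam *\<^sub>R v"
      using it unfolding resolvent_def by blast
    then obtain u where "\<forall>k. u k \<in> A (x (Suc (Suc k))) \<and> x (Suc k) - (2 * lam) *\<^sub>R B (x (Suc k)) + lam *\<^sub>R B (x k)
        + alpha *\<^sub>R (x (Suc k) - x k) = x (Suc (Suc k)) + lam *\<^sub>R u k"
      by metis
    thus ?thesis using that by blast
  qed
  have zA: "- B z \<in> A z"
  proof -
    obtain w where "w \<in> A z" "w + B z = 0" using z unfolding zeros_sum_def by blast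
    moreover from \<open>w + B z = 0\<close> have "w = - B z" by (simp add: eq_neg_iff_add_eq_0)
    ultimately show ?thesis by simp
  qed
  define d where "d k = (norm (x k - z))\<^sup>2" for k
  define e where "e k = (norm (x (Suc k) - x k))\<^sup>2" for k
  define a where "a k = inner (x (Suc k) - z) (B (x (Suc k)) - B (x k))" for k
  define phi where "phi k = d (Suc k) - alpha * d k - 2 * lam * a k + (alpha + kap) * e k" for k
  define delta where "delta = 1 - alpha - 2 * kap"
  have dl0: "delta > 0" unfolding delta_def using del by simp
  have step: "phi (Suc k) \<le> phi k - delta * e (Suc k)" for k
    using lyap_step[OF mA mB kapb k0 lam uA[of k] ue[of k] zA]
    unfolding phi_def d_def e_def a_def delta_def by simp
  have e0: "e k \<ge> 0" for k by (simp add: e_def)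
  have d0: "d k \<ge> 0" for k by (simp add: d_def)
  have dec: "phi (Suc k) \<le> phi k" for k
    using step[of k] mult_nonneg_nonneg[OF less_imp_le[OF dl0] e0[of "Suc k"]] by linarith
  have phile: "phi k \<le> phi 0" for k
    by (induction k) (auto intro: order_trans[OF dec])
  have aabs: "\<bar>a k\<bar> \<le> norm (x (Suc k) - z) * (L * norm (x (Suc k) - x k))" for k
  proof -
    have "\<bar>a k\<bar> \<le> norm (x (Suc k) - z) * norm (B (x (Suc k)) - B (x k))"
      unfolding a_def by (rule Cauchy_Schwarz_ineq2)
    also have "\<dots> \<le> norm (x (Suc k) - z) * (L * norm (x (Suc k) - x k))"
      by (intro mult_left_mono lip) simp
    finally show ?thesis .
  qed
  have abound: "2 * lam * a k \<le> lam * L * (d (Suc k) + e k)" for k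
  proof -
    have "2 * a k \<le> 2 * \<bar>a k\<bar>" by simp
    also have "\<dots> \<le> L * (2 * norm (x (Suc k) - z) * norm (x (Suc k) - x k))"
      using aabs[of k] by (simp add: algebra_simps)
    also have "\<dots> \<le> L * (d (Suc k) + e k)"
      unfolding d_def e_def using L0 two_ab_le by (intro mult_left_mono) auto
    finally have "2 * a k \<le> L * (d (Suc k) + e k)" .
    hence "lam * (2 * a k) \<le> lam * (L * (d (Suc k) + e k))" using lam by (intro mult_left_mono) auto
    thus ?thesis by (simp add: algebra_simps)
  qed
  define c where "c = 1 - lam * L"
  have ca: "c > alpha" unfolding c_def using ac by simp
  have lower: "c * d (Suc k) - alpha * d k \<le> phi k" for k
    unfolding c_def phi_def
    by (rule lower_arith[OF abound]) (use ak e0 in auto)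
  define D where "D = max (d 0) (max 0 (phi 0) / (c - alpha))"
  have D0: "D \<ge> 0" unfolding D_def using d0[of 0] by simp
  have phiD: "phi 0 \<le> (c - alpha) * D"
  proof -
    have "max 0 (phi 0) / (c - alpha) \<le> D" unfolding D_def by simp
    hence "max 0 (phi 0) \<le> (c - alpha) * D" using ca by (simp add: divide_le_eq mult.commute)
    thus ?thesis by linarith
  qed
  have dD: "d k \<le> D" for k
  proof (induction k)
    case 0
    then show ?case unfolding D_def by simp
  next
    case (Suc k)
    have "c * d (Suc k) \<le> phi 0 + alpha * d k" using lower[of k] phile[of k] by linarith
    also have "\<dots> \<le> (c - alpha) * D + alpha * D" using phiD Suc.IH a0 by (intro add_mono mult_left_mono) auto
    also have "\<dots> = c * D" by (simp add: algebra_simps)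
    finally have "c * d (Suc k) \<le> c * D" .
    moreover have "c > 0" using ca a0 by linarith
    ultimately show ?case by simp
  qed
  have phib: "- alpha * D \<le> phi k" for k
  proof -
    have "0 \<le> c * d (Suc k)" using ca a0 d0 by simp
    moreover have "alpha * d k \<le> alpha * D" using a0 dD by (intro mult_left_mono) auto
    ultimately show ?thesis using lower[of k] by simp
  qed
  have sumb: "phi n \<le> phi 0 - delta * (\<Sum>j<n. e (Suc j))" for n
  proof (induction n)
    case 0 then show ?case by simp
  next
    case (Suc n)
    then show ?case using step[of n] by (simp add: algebra_simps)
  qed
  have "(\<Sum>j<n. e (Suc j)) \<le> (phi 0 + alpha * D) / delta" for n
  proof -
    have "delta * (\<Sum>j<n. e (Suc j)) \<le> phi 0 + alpha * D" using sumb[of n] phib[of n] by simp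
    thus ?thesis using dl0 by (simp add: le_divide_eq mult.commute)
  qed
  hence "summable (\<lambda>j. e (Suc j))" by (intro summableI_nonneg_bounded[OF e0]) 
  hence "(\<lambda>j. e (Suc j)) \<longlonglongrightarrow> 0" by (rule summable_LIMSEQ_zero)
  hence elim: "e \<longlonglongrightarrow> 0" by (simp add: filterlim_sequentially_Suc)
  have hn: "(\<lambda>k. norm (x (Suc k) - x k)) \<longlonglongrightarrow> 0"
  proof -
    have "(\<lambda>k. sqrt (e k)) \<longlonglongrightarrow> sqrt 0" using elim by (rule tendsto_real_sqrt)
    thus ?thesis unfolding e_def by simp
  qed
  hence hlim: "(\<lambda>k. x (Suc k) - x k) \<longlonglongrightarrow> 0" by (simp add: tendsto_norm_zero_iff)
  have nb: "norm (x k - z) \<le> 1 + D" for k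
    using le_one_plus_sq[of "norm (x k - z)"] dD[of k] unfolding d_def by linarith
  have alim: "a \<longlonglongrightarrow> 0"
  proof (rule null_cmp)
    show "(\<lambda>k. ((1 + D) * L) * norm (x (Suc k) - x k)) \<longlonglongrightarrow> 0"
      using hn by (rule tendsto_mult_right_zero)
    fix k
    have "\<bar>a k\<bar> \<le> norm (x (Suc k) - z) * (L * norm (x (Suc k) - x k))" by (rule aabs)
    also have "\<dots> \<le> (1 + D) * (L * norm (x (Suc k) - x k))"
      using nb L0 by (intro mult_right_mono) auto
    finally show "norm (a k) \<le> ((1 + D) * L) * norm (x (Suc k) - x k)" by (simp add: algebra_simps)
  qed
  have dsq: "decseq phi" using dec by (simp add: decseq_Suc_iff)
  have phib': "\<forall>i. - alpha * D \<le> phi i" using phib by blast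
  obtain l where phil: "phi \<longlonglongrightarrow> l"
    using decseq_convergent[OF dsq phib'] by blast
  have "(\<lambda>k. phi k + 2 * lam * a k - (alpha + kap) * e k) \<longlonglongrightarrow> l + 2 * lam * 0 - (alpha + kap) * 0"
    by (intro tendsto_intros phil alim elim)
  hence "(\<lambda>k. d (Suc k) - alpha * d k) \<longlonglongrightarrow> l" unfolding phi_def by simp
  moreover have "alpha < 1" using ac lam L0 by (smt (verit) mult_nonneg_nonneg)
  ultimately have "convergent d"
    using inertial_limit[of d D alpha l] dD d0 a0 by auto
  moreover have "\<exists>D. \<forall>k. norm (x k - z) \<le> D" using nb by blast
  ultimately show ?thesis using hlim unfolding d_def by blast
qed

lemma params_a:
  fixes B :: "'a::real_inner \<Rightarrow> 'a"
  assumes lipo: "L-lipschitz_on UNIV B" and c: "2 * lam * L < 1 - 3 * alpha"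
    and a0: "0 \<le> alpha" and lam: "lam > 0"
  shows "\<exists>Lp kap. (\<forall>u v. norm (B u - B v) \<le> Lp * norm (u - v)) \<and> Lp \<ge> 0
     \<and> (\<forall>u v. norm (alpha *\<^sub>R (u - v) - lam *\<^sub>R (B u - B v)) \<le> kap * norm (u - v))
     \<and> kap \<ge> 0 \<and> 1 - alpha - 2 * kap > 0 \<and> lam * Lp \<le> alpha + kap \<and> alpha < 1 - lam * Lp"
proof -
  have L0: "L \<ge> 0" using lipschitz_on_nonneg[OF lipo] .
  have lip: "norm (B u - B v) \<le> L * norm (u - v)" for u v
    using lipschitz_onD[OF lipo, of u v] by (simp add: dist_norm)
  have kb: "norm (alpha *\<^sub>R (u - v) - lam *\<^sub>R (B u - B v)) \<le> (alpha + lam * L) * norm (u - v)" for u v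
  proof -
    have "norm (alpha *\<^sub>R (u - v) - lam *\<^sub>R (B u - B v)) \<le> norm (alpha *\<^sub>R (u - v)) + norm (lam *\<^sub>R (B u - B v))"
      by (rule norm_triangle_ineq4)
    also have "\<dots> = alpha * norm (u - v) + lam * norm (B u - B v)" using a0 lam by simp
    also have "\<dots> \<le> alpha * norm (u - v) + lam * (L * norm (u - v))"
      using lip lam by (intro add_left_mono mult_left_mono) auto
    finally show ?thesis by (simp add: algebra_simps)
  qed
  have "lam * L \<ge> 0" using lam L0 by simp
  hence "1 - alpha - 2 * (alpha + lam * L) > 0" "lam * L \<le> alpha + (alpha + lam * L)"
     "alpha < 1 - lam * L" "alpha + lam * L \<ge> 0"
    using c a0 by (auto simp: algebra_simps)
  thus ?thesis using lip kb L0 by blast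
qed

lemma params_b:
  fixes B :: "'a::real_inner \<Rightarrow> 'a"
  assumes L0: "L > 0" and coc: "cocoercive L B" and c: "2 * lam * L < 1 + alpha"
    and a0: "0 \<le> alpha" and a3: "alpha < 1/3" and lam: "lam > 0"
  shows "\<exists>Lp kap. (\<forall>u v. norm (B u - B v) \<le> Lp * norm (u - v)) \<and> Lp \<ge> 0
     \<and> (\<forall>u v. norm (alpha *\<^sub>R (u - v) - lam *\<^sub>R (B u - B v)) \<le> kap * norm (u - v))
     \<and> kap \<ge> 0 \<and> 1 - alpha - 2 * kap > 0 \<and> lam * Lp \<le> alpha + kap \<and> alpha < 1 - lam * Lp"
proof -
  have cc: "(1 / L) * (norm (B u - B v))\<^sup>2 \<le> inner (u - v) (B u - B v)" for u v
    using coc unfolding cocoercive_def by blast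
  have cc': "(norm (B u - B v))\<^sup>2 \<le> L * inner (u - v) (B u - B v)" for u v
  proof -
    have "L * ((1 / L) * (norm (B u - B v))\<^sup>2) \<le> L * inner (u - v) (B u - B v)"
      using cc[of u v] L0 by (intro mult_left_mono) auto
    thus ?thesis using L0 by simp
  qed
  have lip: "norm (B u - B v) \<le> L * norm (u - v)" for u v
  proof (cases "norm (B u - B v) = 0")
    case True then show ?thesis using L0 by simp
  next
    case False
    have "(norm (B u - B v))\<^sup>2 \<le> L * (norm (u - v) * norm (B u - B v))"
      using cc'[of u v] norm_cauchy_schwarz[of "u - v" "B u - B v"] L0
      by (meson mult_left_mono less_imp_le order_trans)
    hence "norm (B u - B v) * norm (B u - B v) \<le> (L * norm (u - v)) * norm (B u - B v)"
      by (simp add: power2_eq_square algebra_simps)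
    thus ?thesis using False by (simp add: mult_le_cancel_right)
  qed
  define kap where "kap = max alpha (lam * L - alpha)"
  have k0: "kap \<ge> 0" unfolding kap_def using a0 by simp
  have kb: "norm (alpha *\<^sub>R (u - v) - lam *\<^sub>R (B u - B v)) \<le> kap * norm (u - v)" for u v
  proof -
    define s where "s = inner (u - v) (B u - B v)"
    define n where "n = (norm (u - v))\<^sup>2"
    define m where "m = (norm (B u - B v))\<^sup>2"
    have ms: "m \<le> L * s" unfolding m_def s_def by (rule cc')
    have sn: "s \<le> L * n"
    proof -
      have "s \<le> norm (u - v) * norm (B u - B v)" unfolding s_def by (rule norm_cauchy_schwarz)
      also have "\<dots> \<le> norm (u - v) * (L * norm (u - v))" by (intro mult_left_mono lip) simp
      finally show ?thesis unfolding n_def by (simp add: power2_eq_square algebra_simps)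
    qed
    have s0: "s \<ge> 0"
    proof -
      have "0 \<le> m" unfolding m_def by simp
      hence "0 \<le> L * s" using ms by linarith
      thus ?thesis using L0 by (simp add: zero_le_mult_iff)
    qed
    have n0: "n \<ge> 0" unfolding n_def by simp
    have expand: "(norm (alpha *\<^sub>R (u - v) - lam *\<^sub>R (B u - B v)))\<^sup>2 = alpha\<^sup>2 * n - 2 * alpha * lam * s + lam\<^sup>2 * m"
      unfolding n_def m_def s_def nsq_diff nsq_scale by (simp add: algebra_simps)
    have "lam\<^sup>2 * m \<le> lam\<^sup>2 * (L * s)" using ms by (intro mult_left_mono) auto
    hence le1: "(norm (alpha *\<^sub>R (u - v) - lam *\<^sub>R (B u - B v)))\<^sup>2 \<le> alpha\<^sup>2 * n + lam * (lam * L - 2 * alpha) * s"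
      unfolding expand by (simp add: power2_eq_square algebra_simps)
    have "(norm (alpha *\<^sub>R (u - v) - lam *\<^sub>R (B u - B v)))\<^sup>2 \<le> kap\<^sup>2 * n"
    proof (cases "lam * L \<le> 2 * alpha")
      case True
      have "lam * (lam * L - 2 * alpha) * s \<le> 0"
      proof (rule mult_nonpos_nonneg[OF _ s0])
        show "lam * (lam * L - 2 * alpha) \<le> 0" using True lam by (intro mult_nonneg_nonpos) auto
      qed
      moreover have "alpha\<^sup>2 * n \<le> kap\<^sup>2 * n"
        using a0 n0 unfolding kap_def by (intro mult_right_mono power_mono) auto
      ultimately show ?thesis using le1 by linarith
    next
      case False
      have "lam * (lam * L - 2 * alpha) * s \<le> lam * (lam * L - 2 * alpha) * (L * n)"
        using False lam sn by (intro mult_left_mono) auto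
      hence "(norm (alpha *\<^sub>R (u - v) - lam *\<^sub>R (B u - B v)))\<^sup>2 \<le> (lam * L - alpha)\<^sup>2 * n"
        using le1 by (simp add: power2_eq_square algebra_simps)
      moreover have "(lam * L - alpha)\<^sup>2 * n \<le> kap\<^sup>2 * n"
        using False a0 n0 unfolding kap_def by (intro mult_right_mono power_mono) auto
      ultimately show ?thesis by linarith
    qed
    also have "\<dots> = (kap * norm (u - v))\<^sup>2" unfolding n_def by (simp add: power_mult_distrib)
    finally have sq: "(norm (alpha *\<^sub>R (u - v) - lam *\<^sub>R (B u - B v)))\<^sup>2 \<le> (kap * norm (u - v))\<^sup>2" .
    show ?thesis by (rule power2_le_imp_le[OF sq]) (use k0 in simp)
  qed
  have "1 - alpha - 2 * kap > 0" unfolding kap_def using a3 c by (cases "alpha \<le> lam * L - alpha") (auto simp: algebra_simps max_def)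
  moreover have "lam * L \<le> alpha + kap" unfolding kap_def by simp
  moreover have "alpha < 1 - lam * L" using a3 c by (simp add: algebra_simps)
  ultimately show ?thesis using lip kb k0 L0 by (intro exI[of _ L] exI[of _ kap]) auto
qed

lemma cluster:
  fixes A :: "'a::{real_inner,complete_space} \<Rightarrow> 'a set" and B :: "'a \<Rightarrow> 'a"
    and x u :: "nat \<Rightarrow> 'a" and alpha lam L D :: real
  assumes mm: "max_monotone_op A" and mB: "monotone_fun B"
    and lip: "\<And>u v. norm (B u - B v) \<le> L * norm (u - v)" and L0: "L \<ge> 0"
    and lam: "lam > 0"
    and uA: "\<And>k. u k \<in> A (x (Suc (Suc k)))"
    and ue: "\<And>k. x (Suc k) - (2 * lam) *\<^sub>R B (x (Suc k)) + lam *\<^sub>R B (x k) + alpha *\<^sub>R (x (Suc k) - x k)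
               = x (Suc (Suc k)) + lam *\<^sub>R u k"
    and hl: "(\<lambda>k. x (Suc k) - x k) \<longlonglongrightarrow> 0"
    and xb: "\<And>k. norm (x k - z0) \<le> D"
    and \<sigma>: "strict_mono \<sigma>" and wp: "weakly_converges (x \<circ> \<sigma>) p"
  shows "p \<in> zeros_sum A B"
proof -
  define h where "h k = x (Suc k) - x k" for k
  define W where "W k = u k + B (x (Suc (Suc k)))" for k
  define Bd where "Bd k = B (x (Suc k)) - B (x k)" for k
  have h0: "h \<longlonglongrightarrow> 0" using hl unfolding h_def .
  have hS: "(\<lambda>k. h (Suc k)) \<longlonglongrightarrow> 0" using h0 by (simp add: filterlim_sequentially_Suc)
  have Bd0: "Bd \<longlonglongrightarrow> 0"
  proof (rule null_cmp)
    show "(\<lambda>k. L * norm (h k)) \<longlonglongrightarrow> 0" using h0 by (simp add: tendsto_mult_right_zero tendsto_norm_zero)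
    show "norm (Bd k) \<le> L * norm (h k)" for k unfolding Bd_def h_def by (rule lip)
  qed
  have BdS: "(\<lambda>k. Bd (Suc k)) \<longlonglongrightarrow> 0" using Bd0 by (simp add: filterlim_sequentially_Suc)
  have eqW: "lam *\<^sub>R W k = - h (Suc k) + alpha *\<^sub>R h k + lam *\<^sub>R Bd (Suc k) - lam *\<^sub>R Bd k" for k
  proof -
    have luk: "lam *\<^sub>R u k = x (Suc k) - (2 * lam) *\<^sub>R B (x (Suc k)) + lam *\<^sub>R B (x k) + alpha *\<^sub>R (x (Suc k) - x k) - x (Suc (Suc k))"
      using ue[of k] by (simp add: algebra_simps)
    have two: "(2 * lam) *\<^sub>R B (x (Suc k)) = lam *\<^sub>R B (x (Suc k)) + lam *\<^sub>R B (x (Suc k))"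
      by (metis mult_2 scaleR_add_left)
    show ?thesis unfolding W_def h_def Bd_def scaleR_add_right luk two by (simp add: algebra_simps)
  qed
  have "(\<lambda>k. - h (Suc k) + alpha *\<^sub>R h k + lam *\<^sub>R Bd (Suc k) - lam *\<^sub>R Bd k) \<longlonglongrightarrow>
        - 0 + alpha *\<^sub>R 0 + lam *\<^sub>R 0 - lam *\<^sub>R 0"
    by (intro tendsto_intros hS h0 BdS Bd0)
  hence "(\<lambda>k. lam *\<^sub>R W k) \<longlonglongrightarrow> 0" unfolding eqW by simp
  hence "(\<lambda>k. inverse lam *\<^sub>R (lam *\<^sub>R W k)) \<longlonglongrightarrow> inverse lam *\<^sub>R 0"
    by (intro tendsto_intros)
  hence W0: "W \<longlonglongrightarrow> 0" using lam by simp
  define P where "P n = x (Suc (Suc (\<sigma> n)))" for n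
  define U where "U n = u (\<sigma> n)" for n
  have UA: "U n \<in> A (P n)" for n unfolding U_def P_def by (rule uA)
  have UW: "(\<lambda>n. U n + B (P n)) \<longlonglongrightarrow> 0"
    using LIMSEQ_subseq_LIMSEQ[OF W0 \<sigma>] unfolding U_def P_def W_def o_def by simp
  have g0: "(\<lambda>k. x (Suc (Suc k)) - x k) \<longlonglongrightarrow> 0"
  proof -
    have "(\<lambda>k. h (Suc k) + h k) \<longlonglongrightarrow> 0 + 0" by (intro tendsto_intros hS h0)
    thus ?thesis unfolding h_def by simp
  qed
  have wP: "weakly_converges P p"
    unfolding weakly_converges_def
  proof
    fix y
    have a1: "(\<lambda>n. inner (x (\<sigma> n)) y) \<longlonglongrightarrow> inner p y" using wp unfolding weakly_converges_def o_def by blast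
    have "(\<lambda>n. x (Suc (Suc (\<sigma> n))) - x (\<sigma> n)) \<longlonglongrightarrow> 0"
      using LIMSEQ_subseq_LIMSEQ[OF g0 \<sigma>] by (simp add: o_def)
    hence a2: "(\<lambda>n. inner (x (Suc (Suc (\<sigma> n))) - x (\<sigma> n)) y) \<longlonglongrightarrow> inner 0 y"
      by (intro tendsto_inner tendsto_const)
    have "(\<lambda>n. inner (x (\<sigma> n)) y + inner (x (Suc (Suc (\<sigma> n))) - x (\<sigma> n)) y) \<longlonglongrightarrow> inner p y + inner 0 y"
      by (intro tendsto_add a1 a2)
    thus "(\<lambda>n. inner (P n) y) \<longlonglongrightarrow> inner p y" unfolding P_def by (simp add: inner_diff_left)
  qed
  have D0: "D \<ge> 0" using xb[of 0] norm_ge_zero[of "x 0 - z0"] by linarith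
  define R where "R = norm z0 + D + norm (B z0) + L * D"
  have bP: "norm (P n) \<le> R" for n
  proof -
    have "norm (P n) \<le> norm z0 + norm (P n - z0)" using norm_triangle_ineq2[of "P n" z0] by linarith
    moreover have "norm (P n - z0) \<le> D" unfolding P_def by (rule xb)
    moreover have "0 \<le> norm (B z0) + L * D" using L0 D0 by simp
    ultimately show ?thesis unfolding R_def by linarith
  qed
  have bBP: "norm (B (P n)) \<le> R" for n
  proof -
    have "norm (B (P n)) \<le> norm (B z0) + norm (B (P n) - B z0)" using norm_triangle_ineq2[of "B (P n)" "B z0"] by linarith
    moreover have "norm (B (P n) - B z0) \<le> L * norm (P n - z0)" by (rule lip)
    moreover have "L * norm (P n - z0) \<le> L * D" unfolding P_def using L0 xb by (intro mult_left_mono) auto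
    moreover have "0 \<le> norm z0 + D" using D0 by simp
    ultimately show ?thesis unfolding R_def by linarith
  qed
  have "- B p \<in> A p" by (rule demiclosed[OF mm mB lip UA UW wP bP bBP])
  thus ?thesis unfolding zeros_sum_def by force
qed

theorem corollary4p4:
  fixes A :: "'a::{real_inner, complete_space} \<Rightarrow> 'a set"
    and B :: "'a \<Rightarrow> 'a"
    and x :: "nat \<Rightarrow> 'a"
    and alpha lam L :: real
  assumes "max_monotone_op A"
    and "monotone_fun B"
    and "zeros_sum A B \<noteq> {}"
    and "0 \<le> alpha" and "alpha < 1 / 3"
    and "lam > 0"
    and "(L-lipschitz_on UNIV B \<and> 2 * lam * L < 1 - 3 * alpha)
         \<or> (L > 0 \<and> cocoercive L B \<and> 2 * lam * L < 1 + alpha)"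
    and "\<And>k. x (Suc (Suc k)) \<in> resolvent lam A
               (x (Suc k) - (2 * lam) *\<^sub>R B (x (Suc k)) + lam *\<^sub>R B (x k)
                + alpha *\<^sub>R (x (Suc k) - x k))"
  shows "\<exists>p \<in> zeros_sum A B. weakly_converges x p"
proof -
  note mm = assms(1) and mB = assms(2) and Zne = assms(3) and a0 = assms(4) and a3 = assms(5)
    and lam = assms(6) and cases = assms(7) and it = assms(8)
  have mA: "monotone_op A" using mm unfolding max_monotone_op_def by blast
  have "\<exists>Lp kap. (\<forall>u v. norm (B u - B v) \<le> Lp * norm (u - v)) \<and> Lp \<ge> 0
     \<and> (\<forall>u v. norm (alpha *\<^sub>R (u - v) - lam *\<^sub>R (B u - B v)) \<le> kap * norm (u - v))
     \<and> kap \<ge> 0 \<and> 1 - alpha - 2 * kap > 0 \<and> lam * Lp \<le> alpha + kap \<and> alpha < 1 - lam * Lp"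
    using cases
  proof
    assume "L-lipschitz_on UNIV B \<and> 2 * lam * L < 1 - 3 * alpha"
    thus ?thesis using params_a a0 lam by blast
  next
    assume "L > 0 \<and> cocoercive L B \<and> 2 * lam * L < 1 + alpha"
    thus ?thesis using params_b a0 a3 lam by blast
  qed
  then obtain Lp kap where lip: "\<And>u v. norm (B u - B v) \<le> Lp * norm (u - v)" and L0: "Lp \<ge> 0"
    and kapb: "\<And>u v. norm (alpha *\<^sub>R (u - v) - lam *\<^sub>R (B u - B v)) \<le> kap * norm (u - v)"
    and k0: "kap \<ge> 0" and del: "1 - alpha - 2 * kap > 0" and ak: "lam * Lp \<le> alpha + kap"
    and ac: "alpha < 1 - lam * Lp"
    by blast
  obtain u where uA: "\<And>k. u k \<in> A (x (Suc (Suc k)))"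
    and ue: "\<And>k. x (Suc k) - (2 * lam) *\<^sub>R B (x (Suc k)) + lam *\<^sub>R B (x k) + alpha *\<^sub>R (x (Suc k) - x k)
               = x (Suc (Suc k)) + lam *\<^sub>R u k"
  proof -
    have "\<forall>k. \<exists>v. v \<in> A (x (Suc (Suc k))) \<and> x (Suc k) - (2 * lam) *\<^sub>R B (x (Suc k)) + lam *\<^sub>R B (x k)
        + alpha *\<^sub>R (x (Suc k) - x k) = x (Suc (Suc k)) + lam *\<^sub>R v"
      using it unfolding resolvent_def by blast
    then obtain u where "\<forall>k. u k \<in> A (x (Suc (Suc k))) \<and> x (Suc k) - (2 * lam) *\<^sub>R B (x (Suc k)) + lam *\<^sub>R B (x k)
        + alpha *\<^sub>R (x (Suc k) - x k) = x (Suc (Suc k)) + lam *\<^sub>R u k"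
      by metis
    thus ?thesis using that by blast
  qed
  note core' = core[where A=A and B=B and x=x and alpha=alpha and lam=lam and L=Lp and kap=kap, OF mA mB lip L0 kapb k0 a0 lam del ak ac it]
  obtain z0 where z0: "z0 \<in> zeros_sum A B" using Zne by blast
  have hl: "(\<lambda>k. x (Suc k) - x k) \<longlonglongrightarrow> 0" using core'[OF z0] by blast
  obtain D where xb: "\<And>k. norm (x k - z0) \<le> D" using core'[OF z0] by blast
  show ?thesis
  proof (rule opial[OF Zne])
    fix z assume "z \<in> zeros_sum A B"
    thus "convergent (\<lambda>k. (norm (x k - z))\<^sup>2)" using core' by blast
  next
    fix \<sigma> p assume "strict_mono \<sigma>" "weakly_converges (x \<circ> \<sigma>) p"
    thus "p \<in> zeros_sum A B" by (rule cluster[where A=A and B=B and x=x and u=u and alpha=alpha and lam=lam and L=Lp and D=D, OF mm mB lip L0 lam uA ue hl xb])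
  qed
qed


end
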